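(* Let $\Lambda$ be a positive integer, $r\in[\Lambda-1]$ an integer, and $K_\alpha\ge0$ integers for $\alpha\in[\Lambda-r]$, not all zero, and let $K=\sum_{\alpha\in[\Lambda-r]}K_\alpha\binom{\Lambda}{\alpha}$. Consider an MADC model on a homogeneous network with $\Lambda$ mapper nodes and $K$ reducer nodes whose mapper–reducer connections are as in the GC-MRG (for each $\alpha\in[\Lambda-r]$ and each $\alpha$-subset $U$ of mapper nodes, exactly $K_\alpha$ reducer nodes are connected exactly to the mapper nodes in $U$), and in which every file is stored at exactly $r$ mapper nodes (computation load $r$). Then the optimal communication load $L^*(r)$ satisfies $$L^*(r)\ \ge\ L^{lb}_{new}(r)=\frac{\sum_{\alpha\in[\Lambda-r]}K_\alpha\binom{\Lambda-r}{\alpha}}{K\sum_{\alpha\in[\Lambda-r]}K_\alpha\left(\binom{\Lambda}{\alpha}-\binom{\Lambda-r}{\alpha}\right)}.$$ Consequently, the computation–communication curve is lower bounded by the lower convex envelope of the points $(r,L^{lb}_{new}(r))$, $r\in[\Lambda-1]$.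
   Context: Notation: $[0,n)=\{0,1,\dots,n-1\}$, $[n]=\{1,\dots,n\}$. MADC (multi-access distributed computing) model: There are $\Lambda$ mapper nodes indexed by $[0,\Lambda)$ and $K$ reducer nodes. There are $N$ input files $w_0,\dots,w_{N-1}\in\mathbb{F}_{2^d}$ and $Q$ output functions $\phi_q:\mathbb{F}_{2^d}^N\to\mathbb{F}_{2^b}$, $q\in[0,Q)$, of the form $\phi_q(w_0,\dots,w_{N-1})=h_q(v_{q,0},\dots,v_{q,N-1})$, where $v_{q,n}=g_{q,n}(w_n)\in\mathbb{F}_{2^t}$ is called an intermediate value (IV). Each reducer node $k$ is assigned a set $\mathcal W_k\subseteq[0,Q)$ of $Q/K$ output functions, these sets being pairwise disjoint. Map phase: each mapper node $\lambda$ stores a set of files and computes all IVs $v_{q,n}$, $q\in[0,Q)$, of its stored files. Each reducer node is connected to a set of mapper nodes and has access to every file stored at any mapper node it is connected to, together with all IVs computed from those files. Shuffle phase: each reducer node $k$ broadcasts to all other reducer nodes, error-free, a message $\mathbf X_k$ of $l_k$ bits that is a function of the IVs it has access to. Reduce phase: each reducer node $k$ must recover all IVs $v_{q,n}$ with $q\in\mathcal W_k$, $n\in[0,N)$, from the received messages and the IVs it has access to. The computation load $r$ is the total number of files stored across mapper nodes divided by $N$; the communication load is $L=\sum_k l_k/(QNt)$. The optimal communication load $L^*(r)$ is the infimum of achievable communication loads over all map assignments with computation load $r$ (compatible with the stated network) and all valid shuffle/reduce schemes, with the IVs modeled as i.i.d. uniform on $\mathbb{F}_{2^t}$. *)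

theory Defs
  imports Complex_Main
begin

(* An element of F_{2^t} is encoded as a natural
   number below 2^t (only the size 2^t of the alphabet matters, the IVs being
   i.i.d. uniform). *)

definition GC_MRG_conn ::
    "nat \<Rightarrow> nat \<Rightarrow> (nat \<Rightarrow> nat) \<Rightarrow> nat \<Rightarrow> (nat \<Rightarrow> nat set) \<Rightarrow> bool" where
  "GC_MRG_conn Lam r Kal K conn \<longleftrightarrow>
     (\<forall>U. U \<subseteq> {0..<Lam} \<and> 1 \<le> card U \<and> card U \<le> Lam - r \<longrightarrow>
        card {k\<in>{0..<K}. conn k = U} = Kal (card U))"

definition reduce_assignment :: "nat \<Rightarrow> nat \<Rightarrow> (nat \<Rightarrow> nat set) \<Rightarrow> bool" where
  "reduce_assignment K Q W \<longleftrightarrow>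
     (\<forall>k\<in>{0..<K}. W k \<subseteq> {0..<Q} \<and> card (W k) = Q div K) \<and>
     (\<forall>k\<in>{0..<K}. \<forall>k'\<in>{0..<K}. k \<noteq> k' \<longrightarrow> W k \<inter> W k' = {})"

definition map_assignment :: "nat \<Rightarrow> nat \<Rightarrow> nat \<Rightarrow> (nat \<Rightarrow> nat set) \<Rightarrow> bool" where
  "map_assignment Lam N r M \<longleftrightarrow>
     (\<forall>l\<in>{0..<Lam}. M l \<subseteq> {0..<N}) \<and>
     (\<forall>n\<in>{0..<N}. card {l\<in>{0..<Lam}. n \<in> M l} = r)"

definition accessible_files :: "nat \<Rightarrow> (nat \<Rightarrow> nat set) \<Rightarrow> (nat \<Rightarrow> nat set) \<Rightarrow> nat \<Rightarrow> nat set" where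
  "accessible_files Lam conn M k = (\<Union>l\<in>conn k \<inter> {0..<Lam}. M l)"

text \<open>All realizations of the IVs: v q n is the IV v_{q,n}, an element of a set of
  size 2^t; values outside the index range are normalised to 0.\<close>
definition IV_space :: "nat \<Rightarrow> nat \<Rightarrow> nat \<Rightarrow> (nat \<Rightarrow> nat \<Rightarrow> nat) set" where
  "IV_space Q N t = {v. \<forall>q n. v q n < 2 ^ t \<and> (\<not> (q < Q \<and> n < N) \<longrightarrow> v q n = 0)}"

definition restrict_IV :: "nat set \<Rightarrow> (nat \<Rightarrow> nat \<Rightarrow> nat) \<Rightarrow> nat \<Rightarrow> nat \<Rightarrow> nat" where
  "restrict_IV F v = (\<lambda>q n. if n \<in> F then v q n else 0)"

text \<open>A valid shuffle/reduce scheme: message X k (of l k bits, encoded as a number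
  below 2^(l k)) is a function of the IVs accessible to reducer k; every
  reducer k can decode (error-free, for every IV realization) all IVs v_{q,n}
  with q in W k from the other reducers' messages and its accessible IVs.\<close>
definition valid_scheme ::
    "nat \<Rightarrow> nat \<Rightarrow> nat \<Rightarrow> nat \<Rightarrow> nat \<Rightarrow> (nat \<Rightarrow> nat set) \<Rightarrow> (nat \<Rightarrow> nat set) \<Rightarrow> (nat \<Rightarrow> nat set)
     \<Rightarrow> (nat \<Rightarrow> (nat \<Rightarrow> nat \<Rightarrow> nat) \<Rightarrow> nat) \<Rightarrow> (nat \<Rightarrow> nat) \<Rightarrow> bool" where
  "valid_scheme Lam K Q N t conn M W X l \<longleftrightarrow>
     (\<forall>k\<in>{0..<K}. \<forall>v\<in>IV_space Q N t. X k v < 2 ^ l k) \<and>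
     (\<forall>k\<in>{0..<K}. \<forall>v\<in>IV_space Q N t. \<forall>v'\<in>IV_space Q N t.
        restrict_IV (accessible_files Lam conn M k) v =
        restrict_IV (accessible_files Lam conn M k) v' \<longrightarrow> X k v = X k v') \<and>
     (\<forall>k\<in>{0..<K}. \<exists>dec :: (nat \<Rightarrow> nat) \<Rightarrow> (nat \<Rightarrow> nat \<Rightarrow> nat) \<Rightarrow> nat \<Rightarrow> nat \<Rightarrow> nat.
        \<forall>v\<in>IV_space Q N t. \<forall>q\<in>W k. \<forall>n\<in>{0..<N}.
          dec (\<lambda>k'. if k' \<in> {0..<K} \<and> k' \<noteq> k then X k' v else 0)
              (restrict_IV (accessible_files Lam conn M k) v) q n = v q n)"

definition comm_load :: "nat \<Rightarrow> nat \<Rightarrow> nat \<Rightarrow> nat \<Rightarrow> (nat \<Rightarrow> nat) \<Rightarrow> real" where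
  "comm_load K Q N t l = real (\<Sum>k<K. l k) / (real Q * real N * real t)"

definition L_lb_new :: "nat \<Rightarrow> nat \<Rightarrow> (nat \<Rightarrow> nat) \<Rightarrow> nat \<Rightarrow> real" where
  "L_lb_new Lam r Kal K =
     real (\<Sum>a=1..Lam-r. Kal a * ((Lam - r) choose a)) /
     (real K * (\<Sum>a=1..Lam-r. real (Kal a) * (real (Lam choose a) - real ((Lam - r) choose a))))"

end

theory Submission
  imports Defs "HOL-Library.FuncSet"
begin

definition cls :: "'w set \<Rightarrow> ('w \<Rightarrow> 'a) \<Rightarrow> 'w \<Rightarrow> nat" where
  "cls \<Omega> f w = card {w'\<in>\<Omega>. f w' = f w}"

definition ent :: "'w set \<Rightarrow> ('w \<Rightarrow> 'a) \<Rightarrow> real" where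
  "ent \<Omega> f = ln (real (card \<Omega>)) - (\<Sum>w\<in>\<Omega>. ln (real (cls \<Omega> f w))) / real (card \<Omega>)"

lemma cls_pos: "finite \<Omega> \<Longrightarrow> w \<in> \<Omega> \<Longrightarrow> cls \<Omega> f w > 0"
  unfolding cls_def by (subst card_gt_0_iff) auto

lemma ent_cong:
  assumes "\<And>a b. a \<in> \<Omega> \<Longrightarrow> b \<in> \<Omega> \<Longrightarrow> f a = f b \<longleftrightarrow> g a = g b"
  shows "ent \<Omega> f = ent \<Omega> g"
proof -
  have "\<And>w. w \<in> \<Omega> \<Longrightarrow> cls \<Omega> f w = cls \<Omega> g w"
    unfolding cls_def using assms by (metis (no_types, lifting) Collect_cong)
  then have "(\<Sum>w\<in>\<Omega>. ln (real (cls \<Omega> f w))) = (\<Sum>w\<in>\<Omega>. ln (real (cls \<Omega> g w)))"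
    by (intro sum.cong) auto
  then show ?thesis unfolding ent_def by simp
qed

lemma ent_mono:
  assumes "finite \<Omega>" and "\<And>a b. a \<in> \<Omega> \<Longrightarrow> b \<in> \<Omega> \<Longrightarrow> f a = f b \<Longrightarrow> g a = g b"
  shows "ent \<Omega> g \<le> ent \<Omega> f"
proof -
  have "\<And>w. w \<in> \<Omega> \<Longrightarrow> ln (real (cls \<Omega> f w)) \<le> ln (real (cls \<Omega> g w))"
  proof -
    fix w assume w: "w \<in> \<Omega>"
    have "cls \<Omega> f w \<le> cls \<Omega> g w" unfolding cls_def
    proof (rule card_mono)
      show "finite {w'\<in>\<Omega>. g w' = g w}" using assms(1) by simp
      show "{w'\<in>\<Omega>. f w' = f w} \<subseteq> {w'\<in>\<Omega>. g w' = g w}" using assms(2) w by blast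
    qed
    then show "ln (real (cls \<Omega> f w)) \<le> ln (real (cls \<Omega> g w))"
      using cls_pos[OF assms(1) w, of f] by simp
  qed
  then have "(\<Sum>w\<in>\<Omega>. ln (real (cls \<Omega> f w))) \<le> (\<Sum>w\<in>\<Omega>. ln (real (cls \<Omega> g w)))"
    by (rule sum_mono)
  then have "(\<Sum>w\<in>\<Omega>. ln (real (cls \<Omega> f w))) / real (card \<Omega>) \<le> (\<Sum>w\<in>\<Omega>. ln (real (cls \<Omega> g w))) / real (card \<Omega>)"
    by (rule divide_right_mono) simp
  then show ?thesis unfolding ent_def by linarith
qed

lemma ent_const: "finite \<Omega> \<Longrightarrow> ent \<Omega> (\<lambda>w. c) = 0"
  unfolding ent_def cls_def by simp

lemma ent_uniform:
  assumes "finite \<Omega>" "\<Omega> \<noteq> {}" "\<And>w. w \<in> \<Omega> \<Longrightarrow> cls \<Omega> f w = c"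
  shows "ent \<Omega> f = ln (real (card \<Omega>)) - ln (real c)"
  using assms unfolding ent_def by simp

lemma sum_inv_cls:
  assumes "finite \<Omega>"
  shows "(\<Sum>w\<in>\<Omega>. 1 / real (cls \<Omega> f w)) = real (card (f ` \<Omega>))"
proof -
  have "(\<Sum>w\<in>\<Omega>. 1 / real (cls \<Omega> f w)) =
        (\<Sum>y\<in>f ` \<Omega>. \<Sum>w\<in>{w\<in>\<Omega>. f w = y}. 1 / real (cls \<Omega> f w))"
    using assms by (rule sum.image_gen)
  also have "\<dots> = (\<Sum>y\<in>f ` \<Omega>. 1)"
  proof (rule sum.cong)
    fix y assume y: "y \<in> f ` \<Omega>"
    have "\<And>w. w \<in> {w\<in>\<Omega>. f w = y} \<Longrightarrow> cls \<Omega> f w = card {w\<in>\<Omega>. f w = y}"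
      unfolding cls_def by auto
    then have "(\<Sum>w\<in>{w\<in>\<Omega>. f w = y}. 1 / real (cls \<Omega> f w))
             = (\<Sum>w\<in>{w\<in>\<Omega>. f w = y}. 1 / real (card {w\<in>\<Omega>. f w = y}))"
      by simp
    also have "\<dots> = 1"
    proof -
      have "card {w\<in>\<Omega>. f w = y} > 0" using y assms by (subst card_gt_0_iff) auto
      then show ?thesis by simp
    qed
    finally show "(\<Sum>w\<in>{w\<in>\<Omega>. f w = y}. 1 / real (cls \<Omega> f w)) = 1" .
  qed simp
  finally show ?thesis by simp
qed

lemma ent_le_card:
  assumes "finite \<Omega>" "f ` \<Omega> \<subseteq> V" "finite V"
  shows "ent \<Omega> f \<le> ln (real (card V))"
proof (cases "\<Omega> = {}")
  case True
  have "0 \<le> ln (real (card V))" by (cases "card V = 0") auto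
  then show ?thesis using True unfolding ent_def by simp
next
  case False
  define n where "n = real (card \<Omega>)"
  define m where "m = real (card (f ` \<Omega>))"
  have n: "n > 0" using False assms unfolding n_def by (simp add: card_gt_0_iff)
  have m: "m > 0" using False assms unfolding m_def by (simp add: card_gt_0_iff)
  have mV: "m \<le> real (card V)" unfolding m_def using assms by (simp add: card_mono)
  have c: "\<And>w. w \<in> \<Omega> \<Longrightarrow> real (cls \<Omega> f w) > 0" using cls_pos[OF assms(1)] by simp
  have "ent \<Omega> f - ln m = (\<Sum>w\<in>\<Omega>. ln (n / (m * real (cls \<Omega> f w)))) / n"
  proof -
    have "(\<Sum>w\<in>\<Omega>. ln (n / (m * real (cls \<Omega> f w))))
        = (\<Sum>w\<in>\<Omega>. ln n - ln m - ln (real (cls \<Omega> f w)))"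
      using c n m by (intro sum.cong) (auto simp: ln_div ln_mult)
    also have "\<dots> = n * ln n - n * ln m - (\<Sum>w\<in>\<Omega>. ln (real (cls \<Omega> f w)))"
      by (simp add: sum_subtractf n_def sum.distrib algebra_simps)
    finally show ?thesis unfolding ent_def n_def[symmetric] using n
      by (simp add: field_simps)
  qed
  also have "\<dots> \<le> (\<Sum>w\<in>\<Omega>. n / (m * real (cls \<Omega> f w)) - 1) / n"
    using n c m by (intro divide_right_mono sum_mono ln_le_minus_one) auto
  also have "\<dots> = ((n / m) * (\<Sum>w\<in>\<Omega>. 1 / real (cls \<Omega> f w)) - n) / n"
    by (simp add: sum_subtractf sum_distrib_left n_def)
  also have "\<dots> = 0" unfolding sum_inv_cls[OF assms(1)] m_def[symmetric] using m n by simp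
  finally have "ent \<Omega> f \<le> ln m" by simp
  also have "\<dots> \<le> ln (real (card V))" using m mV by simp
  finally show ?thesis .
qed

lemma key_sum:
  fixes f :: "'w \<Rightarrow> 'a" and g :: "'w \<Rightarrow> 'b" and h :: "'w \<Rightarrow> 'c"
  assumes fin: "finite \<Omega>"
  shows "(\<Sum>w\<in>\<Omega>. real (cls \<Omega> (\<lambda>w. (f w, g w)) w) * real (cls \<Omega> (\<lambda>w. (g w, h w)) w)
            / (real (cls \<Omega> (\<lambda>w. (f w, g w, h w)) w) * real (cls \<Omega> g w))) \<le> real (card \<Omega>)"
proof -
  define A where "A w = {a\<in>\<Omega>. f a = f w \<and> g a = g w}" for w
  define B where "B w = {b\<in>\<Omega>. g b = g w \<and> h b = h w}" for w
  define c1 where "c1 w = real (cls \<Omega> (\<lambda>w. (f w, g w, h w)) w)" for w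
  define c2 where "c2 w = real (cls \<Omega> g w)" for w
  have c1p: "w \<in> \<Omega> \<Longrightarrow> c1 w > 0" for w unfolding c1_def using cls_pos[OF fin] by simp
  have c2p: "w \<in> \<Omega> \<Longrightarrow> c2 w > 0" for w unfolding c2_def using cls_pos[OF fin] by simp
  have "(\<Sum>w\<in>\<Omega>. real (cls \<Omega> (\<lambda>w. (f w, g w)) w) * real (cls \<Omega> (\<lambda>w. (g w, h w)) w)
            / (c1 w * c2 w))
      = (\<Sum>w\<in>\<Omega>. \<Sum>p\<in>\<Omega>\<times>\<Omega>. (if p \<in> A w \<times> B w then 1 else 0) / (c1 w * c2 w))"
  proof (rule sum.cong[OF refl])
    fix w assume w: "w \<in> \<Omega>"
    have AB: "A w \<times> B w \<subseteq> \<Omega> \<times> \<Omega>" unfolding A_def B_def by auto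
    have "(\<Sum>p\<in>\<Omega>\<times>\<Omega>. (if p \<in> A w \<times> B w then 1 else 0) / (c1 w * c2 w))
        = (\<Sum>p\<in>\<Omega>\<times>\<Omega>. (if p \<in> A w \<times> B w then 1 else 0)) / (c1 w * c2 w)"
      by (simp add: sum_divide_distrib)
    also have "(\<Sum>p\<in>\<Omega>\<times>\<Omega>. (if p \<in> A w \<times> B w then 1 else 0) :: real) = real (card (A w \<times> B w))"
      using fin AB by (simp add: sum.If_cases Int_absorb1)
    also have "card (A w \<times> B w) = cls \<Omega> (\<lambda>w. (f w, g w)) w * cls \<Omega> (\<lambda>w. (g w, h w)) w"
      unfolding card_cartesian_product A_def B_def cls_def by simp
    finally show "real (cls \<Omega> (\<lambda>w. (f w, g w)) w) * real (cls \<Omega> (\<lambda>w. (g w, h w)) w) / (c1 w * c2 w)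
       = (\<Sum>p\<in>\<Omega>\<times>\<Omega>. (if p \<in> A w \<times> B w then 1 else 0) / (c1 w * c2 w))" by simp
  qed
  also have "\<dots> = (\<Sum>p\<in>\<Omega>\<times>\<Omega>. \<Sum>w\<in>\<Omega>. (if p \<in> A w \<times> B w then 1 else 0) / (c1 w * c2 w))"
    by (rule sum.swap)
  also have "\<dots> \<le> (\<Sum>p\<in>\<Omega>\<times>\<Omega>. (if g (fst p) = g (snd p) then 1 / c2 (fst p) else 0))"
  proof (rule sum_mono)
    fix p assume p: "p \<in> \<Omega> \<times> \<Omega>"
    obtain a b where ab: "p = (a, b)" "a \<in> \<Omega>" "b \<in> \<Omega>" using p by auto
    define E where "E = {w\<in>\<Omega>. f w = f a \<and> g w = g a \<and> g w = g b \<and> h w = h b}"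
    have memE: "w \<in> \<Omega> \<Longrightarrow> p \<in> A w \<times> B w \<longleftrightarrow> w \<in> E" for w
      unfolding ab A_def B_def E_def using ab by auto
    have "(\<Sum>w\<in>\<Omega>. (if p \<in> A w \<times> B w then 1 else 0) / (c1 w * c2 w))
        = (\<Sum>w\<in>\<Omega>. (if w \<in> E then 1 / (c1 w * c2 w) else 0))"
      using memE by (intro sum.cong) auto
    also have "\<dots> = (\<Sum>w\<in>E. 1 / (c1 w * c2 w))"
      using fin by (simp add: sum.If_cases E_def Int_def)
    finally have eq: "(\<Sum>w\<in>\<Omega>. (if p \<in> A w \<times> B w then 1 else 0) / (c1 w * c2 w)) = (\<Sum>w\<in>E. 1 / (c1 w * c2 w))" .
    show "(\<Sum>w\<in>\<Omega>. (if p \<in> A w \<times> B w then 1 else 0) / (c1 w * c2 w))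
          \<le> (if g (fst p) = g (snd p) then 1 / c2 (fst p) else 0)"
    proof (cases "E = {}")
      case True
      then show ?thesis unfolding eq using c2p[of a] ab by auto
    next
      case False
      then obtain w0 where w0: "w0 \<in> E" by auto
      have gab: "g a = g b" using w0 unfolding E_def by auto
      have "\<And>w. w \<in> E \<Longrightarrow> c1 w = real (card E) \<and> c2 w = c2 a"
      proof -
        fix w assume w: "w \<in> E"
        have "{w'\<in>\<Omega>. (f w', g w', h w') = (f w, g w, h w)} = E" using w unfolding E_def by auto
        moreover have "{w'\<in>\<Omega>. g w' = g w} = {w'\<in>\<Omega>. g w' = g a}" using w unfolding E_def by auto
        ultimately show "c1 w = real (card E) \<and> c2 w = c2 a" unfolding c1_def c2_def cls_def by simp
      qed
      then have "(\<Sum>w\<in>E. 1 / (c1 w * c2 w)) = (\<Sum>w\<in>E. 1 / (real (card E) * c2 a))"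
        by (intro sum.cong) auto
      also have "\<dots> = 1 / c2 a"
      proof -
        have "finite E" using fin unfolding E_def by auto
        then have "real (card E) > 0" using False by (simp add: card_gt_0_iff)
        then show ?thesis by simp
      qed
      finally show ?thesis unfolding eq using ab gab by simp
    qed
  qed
  also have "\<dots> = (\<Sum>a\<in>\<Omega>. \<Sum>b\<in>\<Omega>. (if g a = g b then 1 / c2 a else 0))"
    by (simp add: sum.cartesian_product case_prod_beta)
  also have "\<dots> = (\<Sum>a\<in>\<Omega>. 1)"
  proof (rule sum.cong[OF refl])
    fix a assume a: "a \<in> \<Omega>"
    have "(\<Sum>b\<in>\<Omega>. (if g a = g b then 1 / c2 a else 0)) = (\<Sum>b\<in>{b\<in>\<Omega>. g b = g a}. 1 / c2 a)"
      using fin by (simp add: sum.If_cases Int_def eq_commute)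
    also have "\<dots> = c2 a * (1 / c2 a)" unfolding c2_def cls_def by simp
    also have "\<dots> = 1" using c2p[OF a] by simp
    finally show "(\<Sum>b\<in>\<Omega>. (if g a = g b then 1 / c2 a else 0)) = 1" .
  qed
  finally show ?thesis unfolding c1_def c2_def by simp
qed

lemma ent_submod:
  fixes f :: "'w \<Rightarrow> 'a" and g :: "'w \<Rightarrow> 'b" and h :: "'w \<Rightarrow> 'c"
  assumes fin: "finite \<Omega>"
  shows "ent \<Omega> (\<lambda>w. (f w, g w, h w)) + ent \<Omega> g \<le> ent \<Omega> (\<lambda>w. (f w, g w)) + ent \<Omega> (\<lambda>w. (g w, h w))"
proof (cases "\<Omega> = {}")
  case True then show ?thesis unfolding ent_def by simp
next
  case False
  define n where "n = real (card \<Omega>)"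
  have n: "n > 0" using False fin unfolding n_def by (simp add: card_gt_0_iff)
  define c1 where "c1 w = real (cls \<Omega> (\<lambda>w. (f w, g w, h w)) w)" for w
  define c2 where "c2 w = real (cls \<Omega> g w)" for w
  define c3 where "c3 w = real (cls \<Omega> (\<lambda>w. (f w, g w)) w)" for w
  define c4 where "c4 w = real (cls \<Omega> (\<lambda>w. (g w, h w)) w)" for w
  have pos: "w \<in> \<Omega> \<Longrightarrow> c1 w > 0 \<and> c2 w > 0 \<and> c3 w > 0 \<and> c4 w > 0" for w
    unfolding c1_def c2_def c3_def c4_def by (simp add: cls_pos[OF fin])
  have "(\<Sum>w\<in>\<Omega>. ln (c3 w) + ln (c4 w) - ln (c1 w) - ln (c2 w))
      = (\<Sum>w\<in>\<Omega>. ln (c3 w * c4 w / (c1 w * c2 w)))"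
  proof (rule sum.cong[OF refl])
    fix w assume w: "w \<in> \<Omega>"
    then show "ln (c3 w) + ln (c4 w) - ln (c1 w) - ln (c2 w) = ln (c3 w * c4 w / (c1 w * c2 w))"
      using pos[OF w] by (simp add: ln_div ln_mult)
  qed
  also have "\<dots> \<le> (\<Sum>w\<in>\<Omega>. c3 w * c4 w / (c1 w * c2 w) - 1)"
    using pos by (intro sum_mono ln_le_minus_one) auto
  also have "\<dots> = (\<Sum>w\<in>\<Omega>. c3 w * c4 w / (c1 w * c2 w)) - n"
    by (simp add: sum_subtractf n_def)
  also have "\<dots> \<le> 0"
    using key_sum[OF fin, of f g h] unfolding c1_def c2_def c3_def c4_def n_def by simp
  finally have "(\<Sum>w\<in>\<Omega>. ln (c3 w)) + (\<Sum>w\<in>\<Omega>. ln (c4 w)) \<le> (\<Sum>w\<in>\<Omega>. ln (c1 w)) + (\<Sum>w\<in>\<Omega>. ln (c2 w))"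
    by (simp add: sum_subtractf sum.distrib)
  then have "((\<Sum>w\<in>\<Omega>. ln (c3 w)) + (\<Sum>w\<in>\<Omega>. ln (c4 w))) / n \<le> ((\<Sum>w\<in>\<Omega>. ln (c1 w)) + (\<Sum>w\<in>\<Omega>. ln (c2 w))) / n"
    using n by (simp add: divide_right_mono)
  then show ?thesis unfolding ent_def c1_def[symmetric] c2_def[symmetric] c3_def[symmetric] c4_def[symmetric] n_def[symmetric]
    by (simp add: add_divide_distrib)
qed

definition cond :: "'w set \<Rightarrow> ('w \<Rightarrow> 'a) \<Rightarrow> ('w \<Rightarrow> 'b) \<Rightarrow> real" where
  "cond \<Omega> f g = ent \<Omega> (\<lambda>w. (f w, g w)) - ent \<Omega> g"

lemma cond_nonneg: "finite \<Omega> \<Longrightarrow> cond \<Omega> f g \<ge> 0"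
  unfolding cond_def using ent_mono[of \<Omega> "\<lambda>w. (f w, g w)" g] by auto

lemma cond_reduce:
  assumes "finite \<Omega>"
  shows "cond \<Omega> f (\<lambda>w. (g w, h w)) \<le> cond \<Omega> f g"
  using ent_submod[OF assms, of f g h] unfolding cond_def by simp

definition jnt :: "('i \<Rightarrow> 'w \<Rightarrow> 'b) \<Rightarrow> 'i set \<Rightarrow> 'w \<Rightarrow> ('i \<Rightarrow> 'b)" where
  "jnt Xf S w = restrict (\<lambda>k. Xf k w) S"

lemma cond_subadd:
  assumes fin: "finite \<Omega>" and S: "finite S"
  shows "cond \<Omega> (jnt Xf S) Z \<le> (\<Sum>k\<in>S. cond \<Omega> (Xf k) Z)"
  using S
proof (induction S rule: finite_induct)
  case empty
  have "ent \<Omega> (\<lambda>w. (jnt Xf {} w, Z w)) = ent \<Omega> Z"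
    by (rule ent_cong) (auto simp: jnt_def)
  then show ?case unfolding cond_def by simp
next
  case (insert k S)
  have e1: "ent \<Omega> (\<lambda>w. (jnt Xf (insert k S) w, Z w)) = ent \<Omega> (\<lambda>w. (Xf k w, Z w, jnt Xf S w))"
  proof (rule ent_cong)
    fix a b assume "a \<in> \<Omega>" "b \<in> \<Omega>"
    show "((jnt Xf (insert k S) a, Z a) = (jnt Xf (insert k S) b, Z b)) =
          ((Xf k a, Z a, jnt Xf S a) = (Xf k b, Z b, jnt Xf S b))"
      unfolding jnt_def using insert(2) by (auto simp: restrict_def fun_eq_iff)
  qed
  have e2: "ent \<Omega> (\<lambda>w. (jnt Xf S w, Z w)) = ent \<Omega> (\<lambda>w. (Z w, jnt Xf S w))"
    by (rule ent_cong) auto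
  have "ent \<Omega> (\<lambda>w. (Xf k w, Z w, jnt Xf S w)) + ent \<Omega> Z \<le> ent \<Omega> (\<lambda>w. (Xf k w, Z w)) + ent \<Omega> (\<lambda>w. (Z w, jnt Xf S w))"
    by (rule ent_submod[OF fin])
  then have "cond \<Omega> (jnt Xf (insert k S)) Z \<le> cond \<Omega> (Xf k) Z + cond \<Omega> (jnt Xf S) Z"
    unfolding cond_def e1 e2 by simp
  then show ?case using insert by simp
qed

lemma han:
  assumes fin: "finite \<Omega>" and S: "finite S"
  shows "(\<Sum>k\<in>S. cond \<Omega> (jnt Xf (S - {k})) (\<lambda>w. (Xf k w, Z w)))
         \<le> (real (card S) - 1) * cond \<Omega> (jnt Xf S) Z"
proof -
  have e: "\<And>k. k \<in> S \<Longrightarrow> cond \<Omega> (jnt Xf (S - {k})) (\<lambda>w. (Xf k w, Z w))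
              = ent \<Omega> (\<lambda>w. (jnt Xf S w, Z w)) - ent \<Omega> (\<lambda>w. (Xf k w, Z w))"
  proof -
    fix k assume k: "k \<in> S"
    have "ent \<Omega> (\<lambda>w. (jnt Xf (S - {k}) w, Xf k w, Z w)) = ent \<Omega> (\<lambda>w. (jnt Xf S w, Z w))"
    proof (rule ent_cong)
      fix a b assume "a \<in> \<Omega>" "b \<in> \<Omega>"
      show "((jnt Xf (S - {k}) a, Xf k a, Z a) = (jnt Xf (S - {k}) b, Xf k b, Z b)) =
            ((jnt Xf S a, Z a) = (jnt Xf S b, Z b))"
        unfolding jnt_def using k by (auto simp: restrict_def fun_eq_iff)
    qed
    then show "cond \<Omega> (jnt Xf (S - {k})) (\<lambda>w. (Xf k w, Z w))
              = ent \<Omega> (\<lambda>w. (jnt Xf S w, Z w)) - ent \<Omega> (\<lambda>w. (Xf k w, Z w))"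
      unfolding cond_def by simp
  qed
  have sa: "cond \<Omega> (jnt Xf S) Z \<le> (\<Sum>k\<in>S. cond \<Omega> (Xf k) Z)" by (rule cond_subadd[OF fin S])
  have "(\<Sum>k\<in>S. cond \<Omega> (jnt Xf (S - {k})) (\<lambda>w. (Xf k w, Z w)))
       = real (card S) * ent \<Omega> (\<lambda>w. (jnt Xf S w, Z w)) - (\<Sum>k\<in>S. ent \<Omega> (\<lambda>w. (Xf k w, Z w)))"
    using e by (simp add: sum_subtractf)
  moreover have "(\<Sum>k\<in>S. cond \<Omega> (Xf k) Z) = (\<Sum>k\<in>S. ent \<Omega> (\<lambda>w. (Xf k w, Z w))) - real (card S) * ent \<Omega> Z"
    unfolding cond_def by (simp add: sum_subtractf)
  ultimately show ?thesis using sa unfolding cond_def by (simp add: algebra_simps)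
qed

definition prj :: "(nat \<times> nat) set \<Rightarrow> (nat \<Rightarrow> nat \<Rightarrow> nat) \<Rightarrow> (nat \<times> nat \<Rightarrow> nat)" where
  "prj C v = (\<lambda>p. if p \<in> C then v (fst p) (snd p) else 0)"

lemma prj_eq_iff: "prj C v = prj C v' \<longleftrightarrow> (\<forall>p\<in>C. v (fst p) (snd p) = v' (fst p) (snd p))"
  unfolding prj_def fun_eq_iff by auto

lemma card_prj_class:
  assumes C: "C \<subseteq> {0..<Q} \<times> {0..<N}" and v0: "v0 \<in> IV_space Q N t"
  shows "finite {v\<in>IV_space Q N t. prj C v = prj C v0}"
    and "card {v\<in>IV_space Q N t. prj C v = prj C v0} = (2^t) ^ card ({0..<Q} \<times> {0..<N} - C)"
proof -
  define I where "I = {0..<Q} \<times> {0..<N}"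
  define A where "A = {v\<in>IV_space Q N t. prj C v = prj C v0}"
  define B where "B = PiE (I - C) (\<lambda>_. {..<(2::nat)^t})"
  define \<phi> where "\<phi> v = restrict (\<lambda>p. v (fst p) (snd p)) (I - C)" for v :: "nat \<Rightarrow> nat \<Rightarrow> nat"
  define \<psi> where "\<psi> g = (\<lambda>q n. if (q, n) \<in> C then v0 q n else if (q, n) \<in> I then g (q, n) else 0)"
    for g :: "nat \<times> nat \<Rightarrow> nat"
  have v0': "\<And>q n. v0 q n < 2 ^ t \<and> (\<not> (q < Q \<and> n < N) \<longrightarrow> v0 q n = 0)"
    using v0 unfolding IV_space_def by auto
  have bij: "bij_betw \<phi> A B"
  proof (rule bij_betw_byWitness[where f' = \<psi>])
    show "\<forall>a\<in>A. \<psi> (\<phi> a) = a"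
    proof
      fix a assume a: "a \<in> A"
      then have a1: "\<And>q n. a q n < 2 ^ t \<and> (\<not> (q < Q \<and> n < N) \<longrightarrow> a q n = 0)"
        unfolding A_def IV_space_def by auto
      have a2: "\<And>p. p \<in> C \<Longrightarrow> a (fst p) (snd p) = v0 (fst p) (snd p)"
        using a unfolding A_def prj_eq_iff by auto
      show "\<psi> (\<phi> a) = a"
      proof (intro ext)
        fix q n
        show "\<psi> (\<phi> a) q n = a q n"
          using a1[of q n] a2[of "(q, n)"] unfolding \<psi>_def \<phi>_def I_def by auto
      qed
    qed
    show "\<forall>a'\<in>B. \<phi> (\<psi> a') = a'"
    proof
      fix g assume g: "g \<in> B"
      show "\<phi> (\<psi> g) = g"
      proof (rule ext)
        fix p
        show "\<phi> (\<psi> g) p = g p"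
          using g unfolding \<phi>_def \<psi>_def B_def PiE_def extensional_def by (cases p) auto
      qed
    qed
    show "\<phi> ` A \<subseteq> B"
    proof
      fix y assume "y \<in> \<phi> ` A"
      then obtain a where a: "a \<in> A" "y = \<phi> a" by auto
      have "\<forall>p \<in> I - C. a (fst p) (snd p) \<in> {..<(2::nat)^t}"
        using a(1) unfolding A_def IV_space_def by auto
      then show "y \<in> B" unfolding a(2) \<phi>_def B_def by (subst restrict_PiE_iff) simp
    qed
    show "\<psi> ` B \<subseteq> A"
    proof
      fix v assume "v \<in> \<psi> ` B"
      then obtain g where g: "g \<in> B" "v = \<psi> g" by auto
      have "\<And>q n. v q n < 2 ^ t \<and> (\<not> (q < Q \<and> n < N) \<longrightarrow> v q n = 0)"
      proof -
        fix q n
        show "v q n < 2 ^ t \<and> (\<not> (q < Q \<and> n < N) \<longrightarrow> v q n = 0)"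
          using g v0'[of q n] C unfolding \<psi>_def B_def I_def by (auto simp: PiE_def Pi_def)
      qed
      moreover have "prj C v = prj C v0" unfolding prj_eq_iff g(2) \<psi>_def by auto
      ultimately show "v \<in> A" unfolding A_def IV_space_def by auto
    qed
  qed
  have finB: "finite B" unfolding B_def I_def by (intro finite_PiE) auto
  show "finite A" using bij finB bij_betw_finite by blast
  have "card A = card B" using bij by (rule bij_betw_same_card)
  also have "card B = (2^t) ^ card (I - C)" unfolding B_def
    by (simp add: card_PiE I_def)
  finally show "card A = (2^t) ^ card ({0..<Q} \<times> {0..<N} - C)" unfolding I_def .
qed

lemma zero_IV: "(\<lambda>q n. 0) \<in> IV_space Q N t"
  unfolding IV_space_def by auto

lemma IV_finite: "finite (IV_space Q N t)"
  and IV_card: "card (IV_space Q N t) = (2^t) ^ (Q * N)"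
proof -
  have e: "{v\<in>IV_space Q N t. prj {} v = prj {} (\<lambda>q n. 0)} = IV_space Q N t"
    unfolding prj_def by auto
  show "finite (IV_space Q N t)" using card_prj_class(1)[of "{}" Q N "\<lambda>q n. 0" t] zero_IV e by simp
  show "card (IV_space Q N t) = (2^t) ^ (Q * N)"
    using card_prj_class(2)[of "{}" Q N "\<lambda>q n. 0" t] zero_IV e by simp
qed

lemma ent_prj:
  assumes C: "C \<subseteq> {0..<Q} \<times> {0..<N}"
  shows "ent (IV_space Q N t) (prj C) = real t * real (card C) * ln 2"
proof -
  define I where "I = {0..<Q} \<times> {0..<N}"
  have finI: "finite I" unfolding I_def by auto
  have eq1: "ent (IV_space Q N t) (prj C) = ln (real (card (IV_space Q N t))) - ln (real ((2^t) ^ card (I - C)))"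
  proof (rule ent_uniform)
    show "finite (IV_space Q N t)" by (rule IV_finite)
    show "IV_space Q N t \<noteq> {}" using zero_IV by auto
    fix w assume "w \<in> IV_space Q N t"
    then show "cls (IV_space Q N t) (prj C) w = (2^t) ^ card (I - C)"
      unfolding cls_def I_def using card_prj_class(2)[OF C] by auto
  qed
  have "ent (IV_space Q N t) (prj C) = ln (real ((2^t) ^ (Q * N))) - ln (real ((2^t) ^ card (I - C)))"
    using eq1 IV_card by simp
  also have "\<dots> = real t * real (Q * N) * ln 2 - real t * real (card (I - C)) * ln 2"
    by (simp add: ln_realpow power_mult[symmetric] mult.commute)
  also have "card (I - C) = Q * N - card C"
    using C finI unfolding I_def by (simp add: card_Diff_subset finite_subset)
  also have "card C \<le> Q * N" using C card_mono[OF finI C[folded I_def]] unfolding I_def by simp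
  ultimately show ?thesis by (simp add: of_nat_diff algebra_simps)
qed

lemma family_sum:
  fixes g :: "nat \<Rightarrow> nat"
  assumes A: "finite A"
  shows "(\<Sum>U\<in>{U. U \<subseteq> A \<and> 1 \<le> card U \<and> card U \<le> m}. g (card U)) = (\<Sum>a=1..m. g a * (card A choose a))"
proof -
  have e: "{U. U \<subseteq> A \<and> 1 \<le> card U \<and> card U \<le> m} = (\<Union>a\<in>{1..m}. {U. U \<subseteq> A \<and> card U = a})"
    by auto
  have "(\<Sum>U\<in>(\<Union>a\<in>{1..m}. {U. U \<subseteq> A \<and> card U = a}). g (card U))
        = (\<Sum>a\<in>{1..m}. \<Sum>U\<in>{U. U \<subseteq> A \<and> card U = a}. g (card U))"
  proof (rule sum.UNION_disjoint)
    show "finite {1..m}" by simp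
    show "\<forall>i\<in>{1..m}. finite {U. U \<subseteq> A \<and> card U = i}" using A by auto
    show "\<forall>i\<in>{1..m}. \<forall>j\<in>{1..m}. i \<noteq> j \<longrightarrow> {U. U \<subseteq> A \<and> card U = i} \<inter> {U. U \<subseteq> A \<and> card U = j} = {}"
      by auto
  qed
  also have "\<dots> = (\<Sum>a\<in>{1..m}. g a * (card A choose a))"
  proof (rule sum.cong[OF refl])
    fix a assume "a \<in> {1..m}"
    have "(\<Sum>U\<in>{U. U \<subseteq> A \<and> card U = a}. g (card U)) = (\<Sum>U\<in>{U. U \<subseteq> A \<and> card U = a}. g a)"
      by (rule sum.cong) auto
    also have "\<dots> = g a * card {U. U \<subseteq> A \<and> card U = a}" by simp
    also have "card {U. U \<subseteq> A \<and> card U = a} = card A choose a" using n_subsets[OF A] by simp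
    finally show "(\<Sum>U\<in>{U. U \<subseteq> A \<and> card U = a}. g (card U)) = g a * (card A choose a)" .
  qed
  finally show ?thesis unfolding e .
qed

lemma conn_union:
  assumes gc: "GC_MRG_conn Lam r Kal K conn"
    and K: "K = (\<Sum>a=1..Lam-r. Kal a * (Lam choose a))"
    and G: "G \<subseteq> {U. U \<subseteq> {0..<Lam} \<and> 1 \<le> card U \<and> card U \<le> Lam - r}"
  shows "card (\<Union>U\<in>G. {k\<in>{0..<K}. conn k = U}) = (\<Sum>U\<in>G. Kal (card U))"
proof -
  have finG: "finite G" using G by (rule finite_subset) auto
  have "card (\<Union>U\<in>G. {k\<in>{0..<K}. conn k = U}) = (\<Sum>U\<in>G. card {k\<in>{0..<K}. conn k = U})"
    using finG by (intro card_UN_disjoint) auto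
  also have "\<dots> = (\<Sum>U\<in>G. Kal (card U))"
    using G gc unfolding GC_MRG_conn_def by (intro sum.cong) auto
  finally show ?thesis .
qed

lemma conn_good:
  assumes gc: "GC_MRG_conn Lam r Kal K conn"
    and K: "K = (\<Sum>a=1..Lam-r. Kal a * (Lam choose a))"
    and k: "k < K"
  shows "conn k \<subseteq> {0..<Lam} \<and> 1 \<le> card (conn k) \<and> card (conn k) \<le> Lam - r"
proof -
  define G where "G = {U. U \<subseteq> {0..<Lam} \<and> 1 \<le> card U \<and> card U \<le> Lam - r}"
  have "card (\<Union>U\<in>G. {k\<in>{0..<K}. conn k = U}) = (\<Sum>U\<in>G. Kal (card U))"
    using conn_union[OF gc K] G_def by simp
  also have "\<dots> = K" unfolding G_def K using family_sum[of "{0..<Lam}" Kal "Lam - r"] by simp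
  finally have c: "card (\<Union>U\<in>G. {k\<in>{0..<K}. conn k = U}) = card {0..<K}" by simp
  have "(\<Union>U\<in>G. {k\<in>{0..<K}. conn k = U}) = {0..<K}"
    by (rule card_subset_eq) (use c in auto)
  then have "k \<in> (\<Union>U\<in>G. {k\<in>{0..<K}. conn k = U})" using k by simp
  then show ?thesis unfolding G_def by auto
qed

lemma count_disjoint:
  assumes gc: "GC_MRG_conn Lam r Kal K conn"
    and K: "K = (\<Sum>a=1..Lam-r. Kal a * (Lam choose a))"
    and S: "S \<subseteq> {0..<Lam}" "card S = r"
  shows "card {k\<in>{0..<K}. conn k \<inter> S = {}} = (\<Sum>a=1..Lam-r. Kal a * ((Lam - r) choose a))"
proof -
  define G where "G = {U. U \<subseteq> {0..<Lam} - S \<and> 1 \<le> card U \<and> card U \<le> Lam - r}"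
  have e: "{k\<in>{0..<K}. conn k \<inter> S = {}} = (\<Union>U\<in>G. {k\<in>{0..<K}. conn k = U})"
  proof
    show "{k\<in>{0..<K}. conn k \<inter> S = {}} \<subseteq> (\<Union>U\<in>G. {k\<in>{0..<K}. conn k = U})"
    proof
      fix k assume k: "k \<in> {k\<in>{0..<K}. conn k \<inter> S = {}}"
      then have "conn k \<in> G" using conn_good[OF gc K, of k] unfolding G_def by auto
      then show "k \<in> (\<Union>U\<in>G. {k\<in>{0..<K}. conn k = U})" using k by auto
    qed
    show "(\<Union>U\<in>G. {k\<in>{0..<K}. conn k = U}) \<subseteq> {k\<in>{0..<K}. conn k \<inter> S = {}}"
      unfolding G_def by auto
  qed
  have "card {k\<in>{0..<K}. conn k \<inter> S = {}} = (\<Sum>U\<in>G. Kal (card U))"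
    unfolding e by (rule conn_union[OF gc K]) (auto simp: G_def)
  also have "\<dots> = (\<Sum>a=1..Lam-r. Kal a * (card ({0..<Lam} - S) choose a))"
    unfolding G_def by (rule family_sum) simp
  also have "card ({0..<Lam} - S) = Lam - r" using S by (simp add: card_Diff_subset finite_subset)
  finally show ?thesis .
qed

locale madc =
  fixes Lam K N Q t :: nat
    and conn M W :: "nat \<Rightarrow> nat set"
    and X :: "nat \<Rightarrow> (nat \<Rightarrow> nat \<Rightarrow> nat) \<Rightarrow> nat"
    and l :: "nat \<Rightarrow> nat"
  assumes Msub: "\<And>i. i < Lam \<Longrightarrow> M i \<subseteq> {0..<N}"
    and red: "reduce_assignment K Q W"
    and valid: "valid_scheme Lam K Q N t conn M W X l"
begin

abbreviation "\<Omega> \<equiv> IV_space Q N t"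
abbreviation "Acc k \<equiv> accessible_files Lam conn M k"
definition "Cacc k = {0..<Q} \<times> Acc k"
definition "Cy k = Cacc k \<union> W k \<times> {0..<N}"
definition "CY R = (\<Union>k\<in>R. Cy k)"
definition "AccU R = (\<Union>k\<in>R. Acc k)"

lemma Acc_sub: "Acc k \<subseteq> {0..<N}"
proof
  fix x assume "x \<in> Acc k"
  then obtain i where "i \<in> conn k" "i < Lam" "x \<in> M i" unfolding accessible_files_def by auto
  then show "x \<in> {0..<N}" using Msub[of i] by auto
qed

lemma W_sub: "k < K \<Longrightarrow> W k \<subseteq> {0..<Q}"
  using red unfolding reduce_assignment_def by auto

lemma W_card: "k < K \<Longrightarrow> card (W k) = Q div K"
  using red unfolding reduce_assignment_def by auto

lemma W_disj: "k < K \<Longrightarrow> k' < K \<Longrightarrow> k \<noteq> k' \<Longrightarrow> W k \<inter> W k' = {}"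
  using red unfolding reduce_assignment_def by auto

lemma Cacc_sub: "Cacc k \<subseteq> {0..<Q} \<times> {0..<N}"
  unfolding Cacc_def using Acc_sub by auto

lemma CY_sub: "R \<subseteq> {0..<K} \<Longrightarrow> CY R \<subseteq> {0..<Q} \<times> {0..<N}"
proof
  fix p assume R: "R \<subseteq> {0..<K}" and p: "p \<in> CY R"
  then obtain k where k: "k \<in> R" "p \<in> Cacc k \<union> W k \<times> {0..<N}" unfolding CY_def Cy_def by auto
  have "k < K" using k R by auto
  then show "p \<in> {0..<Q} \<times> {0..<N}" using k(2) Cacc_sub W_sub[of k] by auto
qed

lemma IV_zero: "v \<in> \<Omega> \<Longrightarrow> \<not> (q < Q \<and> n < N) \<Longrightarrow> v q n = 0"
  unfolding IV_space_def by blast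

lemma IV_lt: "v \<in> \<Omega> \<Longrightarrow> v q n < 2 ^ t"
  unfolding IV_space_def by blast

lemma valid1: "k < K \<Longrightarrow> v \<in> \<Omega> \<Longrightarrow> X k v < 2 ^ l k"
proof -
  assume k: "k < K" and v: "v \<in> \<Omega>"
  have "\<forall>k\<in>{0..<K}. \<forall>v\<in>\<Omega>. X k v < 2 ^ l k"
    using valid[unfolded valid_scheme_def] by (rule conjunct1)
  moreover have "k \<in> {0..<K}" using k by simp
  ultimately show ?thesis using v by blast
qed

lemma valid2: "k < K \<Longrightarrow> v \<in> \<Omega> \<Longrightarrow> v' \<in> \<Omega> \<Longrightarrow>
    restrict_IV (Acc k) v = restrict_IV (Acc k) v' \<Longrightarrow> X k v = X k v'"
proof -
  assume k: "k < K" and v: "v \<in> \<Omega>" "v' \<in> \<Omega>" and r: "restrict_IV (Acc k) v = restrict_IV (Acc k) v'"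
  have "\<forall>k\<in>{0..<K}. \<forall>v\<in>\<Omega>. \<forall>v'\<in>\<Omega>.
        restrict_IV (Acc k) v = restrict_IV (Acc k) v' \<longrightarrow> X k v = X k v'"
    using valid[unfolded valid_scheme_def] by (rule conjunct2[THEN conjunct1])
  moreover have "k \<in> {0..<K}" using k by simp
  ultimately show ?thesis using v r by blast
qed

lemma valid3: "k < K \<Longrightarrow> \<exists>dec :: (nat \<Rightarrow> nat) \<Rightarrow> (nat \<Rightarrow> nat \<Rightarrow> nat) \<Rightarrow> nat \<Rightarrow> nat \<Rightarrow> nat.
        \<forall>v\<in>\<Omega>. \<forall>q\<in>W k. \<forall>n\<in>{0..<N}.
          dec (\<lambda>k'. if k' \<in> {0..<K} \<and> k' \<noteq> k then X k' v else 0)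
              (restrict_IV (Acc k) v) q n = v q n"
proof -
  assume k: "k < K"
  have "\<forall>k\<in>{0..<K}. \<exists>dec :: (nat \<Rightarrow> nat) \<Rightarrow> (nat \<Rightarrow> nat \<Rightarrow> nat) \<Rightarrow> nat \<Rightarrow> nat \<Rightarrow> nat.
        \<forall>v\<in>\<Omega>. \<forall>q\<in>W k. \<forall>n\<in>{0..<N}.
          dec (\<lambda>k'. if k' \<in> {0..<K} \<and> k' \<noteq> k then X k' v else 0)
              (restrict_IV (Acc k) v) q n = v q n"
    using valid[unfolded valid_scheme_def] by (rule conjunct2[THEN conjunct2])
  moreover have "k \<in> {0..<K}" using k by simp
  ultimately show ?thesis by blast
qed

lemma restrict_eq:
  assumes v: "v \<in> \<Omega>" "v' \<in> \<Omega>" and eq: "prj (Cacc k) v = prj (Cacc k) v'"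
  shows "restrict_IV (Acc k) v = restrict_IV (Acc k) v'"
proof (intro ext)
  fix q n
  show "restrict_IV (Acc k) v q n = restrict_IV (Acc k) v' q n"
  proof (cases "n \<in> Acc k")
    case True
    then have n: "n < N" using Acc_sub[of k] by (meson atLeastLessThan_iff subsetD)
    show ?thesis
    proof (cases "q < Q")
      case True
      then have "(q, n) \<in> Cacc k" using \<open>n \<in> Acc k\<close> unfolding Cacc_def by auto
      then have "v q n = v' q n" using eq unfolding prj_eq_iff by fastforce
      then show ?thesis unfolding restrict_IV_def by simp
    next
      case False
      then show ?thesis using IV_zero[OF v(1), of q n] IV_zero[OF v(2), of q n] unfolding restrict_IV_def by simp
    qed
  next
    case False
    then show ?thesis unfolding restrict_IV_def by simp
  qed
qed

lemma V1:
  assumes k: "k < K" and v: "v \<in> \<Omega>" "v' \<in> \<Omega>" and eq: "prj (Cacc k) v = prj (Cacc k) v'"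
  shows "X k v = X k v'"
  using valid2[OF k v restrict_eq[OF v eq]] .

lemma V2:
  assumes k: "k < K" and v: "v \<in> \<Omega>" "v' \<in> \<Omega>"
    and msg: "\<And>k'. k' < K \<Longrightarrow> k' \<noteq> k \<Longrightarrow> X k' v = X k' v'"
    and eq: "prj (Cacc k) v = prj (Cacc k) v'"
  shows "prj (W k \<times> {0..<N}) v = prj (W k \<times> {0..<N}) v'"
proof -
  obtain dec :: "(nat \<Rightarrow> nat) \<Rightarrow> (nat \<Rightarrow> nat \<Rightarrow> nat) \<Rightarrow> nat \<Rightarrow> nat \<Rightarrow> nat" where
    dec0: "\<forall>v\<in>\<Omega>. \<forall>q\<in>W k. \<forall>n\<in>{0..<N}.
      dec (\<lambda>k'. if k' \<in> {0..<K} \<and> k' \<noteq> k then X k' v else 0)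
          (restrict_IV (Acc k) v) q n = v q n"
    using valid3[OF k] by blast
  have r: "restrict_IV (Acc k) v = restrict_IV (Acc k) v'" by (rule restrict_eq[OF v eq])
  have m: "(\<lambda>k'. if k' \<in> {0..<K} \<and> k' \<noteq> k then X k' v else 0) = (\<lambda>k'. if k' \<in> {0..<K} \<and> k' \<noteq> k then X k' v' else 0)"
    using msg by auto
  show ?thesis unfolding prj_eq_iff
  proof
    fix p assume p: "p \<in> W k \<times> {0..<N}"
    have "dec (\<lambda>k'. if k' \<in> {0..<K} \<and> k' \<noteq> k then X k' v else 0) (restrict_IV (Acc k) v) (fst p) (snd p) = v (fst p) (snd p)"
      using dec0 v(1) p by auto
    moreover have "dec (\<lambda>k'. if k' \<in> {0..<K} \<and> k' \<noteq> k then X k' v' else 0) (restrict_IV (Acc k) v') (fst p) (snd p) = v' (fst p) (snd p)"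
      using dec0 v(2) p by auto
    ultimately show "v (fst p) (snd p) = v' (fst p) (snd p)" using r m by simp
  qed
qed

end

lemma prj_union: "prj (A \<union> B) a = prj (A \<union> B) b \<longleftrightarrow> prj A a = prj A b \<and> prj B a = prj B b"
  unfolding prj_eq_iff by blast

lemma prj_mono: "A \<subseteq> B \<Longrightarrow> prj B a = prj B b \<Longrightarrow> prj A a = prj A b"
  unfolding prj_eq_iff by blast

lemma jnt_eq: "jnt Xf S a = jnt Xf S b \<Longrightarrow> k \<in> S \<Longrightarrow> Xf k a = Xf k b"
  unfolding jnt_def by (metis restrict_apply')

context madc
begin

lemma CY_insert: "CY (insert k R) = Cacc k \<union> W k \<times> {0..<N} \<union> CY R"
  unfolding CY_def Cy_def by auto

lemma Cacc_CY: "k \<in> R \<Longrightarrow> Cacc k \<subseteq> CY R"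
  unfolding CY_def Cy_def by auto

lemma ZE_msgs:
  assumes R: "R \<subseteq> {0..<K}" and a: "a \<in> \<Omega>" and b: "b \<in> \<Omega>"
    and eq: "prj (CY R) a = prj (CY R) b" and k: "k \<in> R"
  shows "X k a = X k b"
proof -
  have "prj (Cacc k) a = prj (Cacc k) b" using prj_mono[OF Cacc_CY[OF k] eq] .
  then show ?thesis using V1[of k a b] R k a b by auto
qed

lemma step:
  assumes S: "S \<subseteq> {0..<K}" and k: "k \<in> S"
  shows "cond \<Omega> (jnt X (S - {k})) (\<lambda>v. (X k v, prj (CY ({0..<K} - S)) v)) \<ge>
     real t * real (Q div K) * real (card {n\<in>{0..<N}. n \<notin> Acc k \<and> n \<notin> AccU ({0..<K} - S)}) * ln 2
     + cond \<Omega> (jnt X (S - {k})) (prj (CY (insert k ({0..<K} - S))))"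
proof -
  define R where "R = {0..<K} - S"
  define J' where "J' = jnt X (S - {k})"
  define ZE where "ZE = prj (CY R)"
  define Fk where "Fk = prj (Cacc k)"
  define Z' where "Z' = prj (CY (insert k R))"
  define D where "D = {n\<in>{0..<N}. n \<notin> Acc k \<and> n \<notin> AccU R}"
  have kK: "k < K" using S k by auto
  have RK: "R \<subseteq> {0..<K}" unfolding R_def by auto
  have kR: "k \<notin> R" using k unfolding R_def by auto
  have fin: "finite \<Omega>" by (rule IV_finite)
  have a: "cond \<Omega> J' (\<lambda>v. ((X k v, ZE v), Fk v)) \<le> cond \<Omega> J' (\<lambda>v. (X k v, ZE v))"
    by (rule cond_reduce[OF fin])
  have b: "ent \<Omega> (\<lambda>v. (J' v, (X k v, ZE v), Fk v)) = ent \<Omega> (\<lambda>v. (J' v, Z' v))"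
  proof (rule ent_cong)
    fix a b assume a: "a \<in> \<Omega>" and b: "b \<in> \<Omega>"
    show "((J' a, (X k a, ZE a), Fk a) = (J' b, (X k b, ZE b), Fk b)) = ((J' a, Z' a) = (J' b, Z' b))"
    proof
      assume h: "(J' a, (X k a, ZE a), Fk a) = (J' b, (X k b, ZE b), Fk b)"
      have msg: "X k' a = X k' b" if "k' < K" "k' \<noteq> k" for k'
      proof (cases "k' \<in> S")
        case True
        then show ?thesis using h that jnt_eq[of X "S - {k}" a b k'] unfolding J'_def by auto
      next
        case False
        then have "k' \<in> R" using that unfolding R_def by auto
        then show ?thesis using ZE_msgs[OF RK a b _ \<open>k' \<in> R\<close>] h unfolding ZE_def by auto
      qed
      have "prj (W k \<times> {0..<N}) a = prj (W k \<times> {0..<N}) b"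
        using V2[OF kK a b msg] h unfolding Fk_def by auto
      moreover have "prj (CY R) a = prj (CY R) b" "prj (Cacc k) a = prj (Cacc k) b"
        using h unfolding ZE_def Fk_def by auto
      ultimately have "prj (CY (insert k R)) a = prj (CY (insert k R)) b"
        unfolding CY_insert prj_eq_iff by blast
      then show "(J' a, Z' a) = (J' b, Z' b)"
        using h unfolding Z'_def by simp
    next
      assume h: "(J' a, Z' a) = (J' b, Z' b)"
      then have z: "prj (CY (insert k R)) a = prj (CY (insert k R)) b" unfolding Z'_def by simp
      have "ZE a = ZE b \<and> Fk a = Fk b"
        unfolding ZE_def Fk_def
        by (intro conjI prj_mono[OF _ z]) (auto simp: CY_insert)
      moreover then have "X k a = X k b" using V1[OF kK a b] unfolding Fk_def by auto
      ultimately show "(J' a, (X k a, ZE a), Fk a) = (J' b, (X k b, ZE b), Fk b)" using h by auto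
    qed
  qed
  have c: "ent \<Omega> (\<lambda>v. ((X k v, ZE v), Fk v)) = ent \<Omega> (prj (CY R \<union> Cacc k))"
  proof (rule ent_cong)
    fix a b assume a: "a \<in> \<Omega>" and b: "b \<in> \<Omega>"
    show "(((X k a, ZE a), Fk a) = ((X k b, ZE b), Fk b)) = (prj (CY R \<union> Cacc k) a = prj (CY R \<union> Cacc k) b)"
      using V1[OF kK a b] unfolding prj_union ZE_def Fk_def by auto
  qed
  have subI1: "CY (insert k R) \<subseteq> {0..<Q} \<times> {0..<N}" using CY_sub[of "insert k R"] RK kK by auto
  have subI2: "CY R \<union> Cacc k \<subseteq> {0..<Q} \<times> {0..<N}" using CY_sub[OF RK] Cacc_sub by auto
  have cardeq: "card (CY (insert k R)) = card (CY R \<union> Cacc k) + (Q div K) * card D"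
  proof -
    have e: "CY (insert k R) = (CY R \<union> Cacc k) \<union> W k \<times> D"
    proof
      show "CY (insert k R) \<subseteq> (CY R \<union> Cacc k) \<union> W k \<times> D"
      proof
        fix p assume p: "p \<in> CY (insert k R)"
        obtain q n where qn: "p = (q, n)" by (cases p)
        show "p \<in> (CY R \<union> Cacc k) \<union> W k \<times> D"
        proof (cases "p \<in> CY R \<union> Cacc k")
          case False
          then have pW: "q \<in> W k" "n < N" using p unfolding CY_insert qn by auto
          have qQ: "q < Q" using W_sub[OF kK] pW by auto
          have "n \<notin> Acc k" using False qQ unfolding qn Cacc_def by auto
          moreover have "n \<notin> AccU R"
          proof
            assume "n \<in> AccU R"
            then obtain k' where "k' \<in> R" "n \<in> Acc k'" unfolding AccU_def by auto
            then have "(q, n) \<in> CY R" using qQ unfolding CY_def Cy_def Cacc_def by auto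
            then show False using False qn by auto
          qed
          ultimately show ?thesis using pW qn unfolding D_def by auto
        qed auto
      qed
      show "(CY R \<union> Cacc k) \<union> W k \<times> D \<subseteq> CY (insert k R)"
        unfolding CY_insert D_def by auto
    qed
    have disj: "(CY R \<union> Cacc k) \<inter> W k \<times> D = {}"
    proof (rule ccontr)
      assume "(CY R \<union> Cacc k) \<inter> W k \<times> D \<noteq> {}"
      then obtain q n where qn: "(q, n) \<in> CY R \<union> Cacc k" "q \<in> W k" "n \<in> D" by auto
      show False
      proof (cases "(q, n) \<in> Cacc k")
        case True then show False using qn unfolding Cacc_def D_def by auto
      next
        case False
        then obtain k' where k': "k' \<in> R" "(q, n) \<in> Cacc k' \<union> W k' \<times> {0..<N}"
          using qn unfolding CY_def Cy_def by auto
        have "k' \<noteq> k" "k' < K" using k' kR RK by auto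
        then have "q \<notin> W k'" using W_disj[OF kK \<open>k' < K\<close>] qn by auto
        then have "n \<in> Acc k'" using k' unfolding Cacc_def by auto
        then show False using k' qn unfolding D_def AccU_def by auto
      qed
    qed
    have finI: "finite (CY R \<union> Cacc k)" using subI2 by (rule finite_subset) auto
    have finD: "finite (W k \<times> D)"
    proof (rule finite_cartesian_product)
      show "finite (W k)" using W_sub[OF kK] by (rule finite_subset) simp
      show "finite D" unfolding D_def by simp
    qed
    have "card (CY (insert k R)) = card (CY R \<union> Cacc k) + card (W k \<times> D)"
      unfolding e using finI finD disj by (rule card_Un_disjoint)
    also have "card (W k \<times> D) = (Q div K) * card D" using W_card[OF kK] by (simp add: card_cartesian_product)
    finally show ?thesis .
  qed
  have "cond \<Omega> J' (\<lambda>v. ((X k v, ZE v), Fk v)) = ent \<Omega> (\<lambda>v. (J' v, Z' v)) - ent \<Omega> (prj (CY R \<union> Cacc k))"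
    unfolding cond_def b[symmetric] c by simp
  also have "\<dots> = cond \<Omega> J' Z' + ent \<Omega> Z' - ent \<Omega> (prj (CY R \<union> Cacc k))"
    unfolding cond_def by simp
  moreover have "ent \<Omega> Z' - ent \<Omega> (prj (CY R \<union> Cacc k)) = real t * real (Q div K) * real (card D) * ln 2"
    unfolding Z'_def ent_prj[OF subI1] ent_prj[OF subI2] cardeq by (simp add: algebra_simps)
  ultimately have "cond \<Omega> J' (\<lambda>v. ((X k v, ZE v), Fk v)) = cond \<Omega> J' Z' + real t * real (Q div K) * real (card D) * ln 2"
    by simp
  then show ?thesis using a unfolding J'_def Z'_def ZE_def D_def R_def by simp
qed

end

lemma per_n_ineq:
  fixes c j m :: real
  assumes "j \<le> c" "c = m + 1" "0 \<le> j"
  shows "(c - j) * (1 + (c - 1 - j) / j) \<ge> m * ((c - j) / j)"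
proof (cases "j = 0")
  case True then show ?thesis using assms by simp
next
  case False
  have "(c - j) * (1 + (c - 1 - j) / j) = m * ((c - j) / j)"
    using False assms(2) by (simp add: field_simps)
  then show ?thesis by simp
qed

context madc
begin

definition "jc S n = card {k\<in>S. n \<in> Acc k}"
definition "fS S n = (real (card S) - real (jc S n)) / real (jc S n)"
definition "bnd S = (\<Sum>n\<in>{0..<N} - AccU ({0..<K} - S). fS S n)"

lemma card_not_hold:
  assumes "finite S"
  shows "card {k\<in>S. n \<notin> Acc k} = card S - jc S n" and "jc S n \<le> card S"
proof -
  have e: "{k\<in>S. n \<notin> Acc k} = S - {k\<in>S. n \<in> Acc k}" by auto
  show "card {k\<in>S. n \<notin> Acc k} = card S - jc S n"
    unfolding e jc_def using assms by (subst card_Diff_subset) auto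
  show "jc S n \<le> card S" unfolding jc_def using assms by (intro card_mono) auto
qed

lemma comb_ineq:
  assumes S: "S \<subseteq> {0..<K}" and cS: "card S = Suc m"
  shows "(\<Sum>k\<in>S. real (card {n\<in>{0..<N}. n \<notin> Acc k \<and> n \<notin> AccU ({0..<K} - S)}) + bnd (S - {k}))
         \<ge> real m * bnd S"
proof -
  define R where "R = {0..<K} - S"
  define D0 where "D0 = {0..<N} - AccU R"
  have finS: "finite S" using S by (rule finite_subset) simp
  have finD0: "finite D0" unfolding D0_def by simp
  have compk: "\<And>k. k \<in> S \<Longrightarrow> {0..<K} - (S - {k}) = insert k R" unfolding R_def using S by auto
  have trm: "\<And>k. k \<in> S \<Longrightarrow> real (card {n\<in>{0..<N}. n \<notin> Acc k \<and> n \<notin> AccU R}) + bnd (S - {k})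
      = (\<Sum>n\<in>D0. if n \<notin> Acc k then 1 + (real (card S) - 1 - real (jc S n)) / real (jc S n) else 0)"
  proof -
    fix k assume k: "k \<in> S"
    have "real (card {n\<in>{0..<N}. n \<notin> Acc k \<and> n \<notin> AccU R}) = (\<Sum>n\<in>D0. if n \<notin> Acc k then 1 else 0)"
    proof -
      have "{n\<in>{0..<N}. n \<notin> Acc k \<and> n \<notin> AccU R} = {n\<in>D0. n \<notin> Acc k}" unfolding D0_def by auto
      then show ?thesis using finD0 by (simp add: sum.If_cases Int_def)
    qed
    moreover have "bnd (S - {k}) = (\<Sum>n\<in>D0. if n \<notin> Acc k then (real (card S) - 1 - real (jc S n)) / real (jc S n) else 0)"
    proof -
      have e1: "{0..<N} - AccU ({0..<K} - (S - {k})) = {n\<in>D0. n \<notin> Acc k}"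
        unfolding compk[OF k] D0_def AccU_def by auto
      have e2: "\<And>n. n \<notin> Acc k \<Longrightarrow> fS (S - {k}) n = (real (card S) - 1 - real (jc S n)) / real (jc S n)"
      proof -
        fix n assume n: "n \<notin> Acc k"
        have "jc (S - {k}) n = jc S n" unfolding jc_def using n by (metis (lifting) Diff_iff singletonD)
        moreover have "card (S - {k}) = card S - 1" using k finS by simp
        moreover have "card S \<ge> 1" using cS by simp
        ultimately show "fS (S - {k}) n = (real (card S) - 1 - real (jc S n)) / real (jc S n)"
          unfolding fS_def by (simp add: of_nat_diff)
      qed
      have "bnd (S - {k}) = (\<Sum>n\<in>{n\<in>D0. n \<notin> Acc k}. fS (S - {k}) n)" unfolding bnd_def e1 ..
      also have "\<dots> = (\<Sum>n\<in>{n\<in>D0. n \<notin> Acc k}. (real (card S) - 1 - real (jc S n)) / real (jc S n))"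
        using e2 by (intro sum.cong) auto
      also have "\<dots> = (\<Sum>n\<in>D0. if n \<notin> Acc k then (real (card S) - 1 - real (jc S n)) / real (jc S n) else 0)"
        using finD0 by (simp add: sum.If_cases Int_def)
      finally show ?thesis .
    qed
    ultimately show "real (card {n\<in>{0..<N}. n \<notin> Acc k \<and> n \<notin> AccU R}) + bnd (S - {k})
      = (\<Sum>n\<in>D0. if n \<notin> Acc k then 1 + (real (card S) - 1 - real (jc S n)) / real (jc S n) else 0)"
      by (simp add: sum.distrib[symmetric] if_distrib cong: if_cong)
  qed
  have "(\<Sum>k\<in>S. real (card {n\<in>{0..<N}. n \<notin> Acc k \<and> n \<notin> AccU R}) + bnd (S - {k}))
      = (\<Sum>k\<in>S. \<Sum>n\<in>D0. if n \<notin> Acc k then 1 + (real (card S) - 1 - real (jc S n)) / real (jc S n) else 0)"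
    using trm by (rule sum.cong[OF refl])
  also have "\<dots> = (\<Sum>n\<in>D0. \<Sum>k\<in>S. if n \<notin> Acc k then 1 + (real (card S) - 1 - real (jc S n)) / real (jc S n) else 0)"
    by (rule sum.swap)
  also have "\<dots> = (\<Sum>n\<in>D0. (real (card S) - real (jc S n)) * (1 + (real (card S) - 1 - real (jc S n)) / real (jc S n)))"
  proof (rule sum.cong[OF refl])
    fix n assume "n \<in> D0"
    have "(\<Sum>k\<in>S. if n \<notin> Acc k then 1 + (real (card S) - 1 - real (jc S n)) / real (jc S n) else 0)
        = real (card {k\<in>S. n \<notin> Acc k}) * (1 + (real (card S) - 1 - real (jc S n)) / real (jc S n))"
      using finS by (simp add: sum.If_cases Int_def)
    also have "real (card {k\<in>S. n \<notin> Acc k}) = real (card S) - real (jc S n)"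
      using card_not_hold[OF finS, of n] by (simp add: of_nat_diff)
    finally show "(\<Sum>k\<in>S. if n \<notin> Acc k then 1 + (real (card S) - 1 - real (jc S n)) / real (jc S n) else 0)
        = (real (card S) - real (jc S n)) * (1 + (real (card S) - 1 - real (jc S n)) / real (jc S n))" .
  qed
  also have "\<dots> \<ge> (\<Sum>n\<in>D0. real m * ((real (card S) - real (jc S n)) / real (jc S n)))"
  proof (rule sum_mono)
    fix n assume "n \<in> D0"
    show "real m * ((real (card S) - real (jc S n)) / real (jc S n))
          \<le> (real (card S) - real (jc S n)) * (1 + (real (card S) - 1 - real (jc S n)) / real (jc S n))"
      by (rule per_n_ineq) (use card_not_hold(2)[OF finS, of n] cS in auto)
  qed
  also have "(\<Sum>n\<in>D0. real m * ((real (card S) - real (jc S n)) / real (jc S n))) = real m * bnd S"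
    unfolding bnd_def fS_def D0_def R_def by (simp add: sum_distrib_left)
  finally show ?thesis unfolding R_def .
qed

end

context madc
begin

lemma main_ind:
  "\<forall>S. S \<subseteq> {0..<K} \<and> S \<noteq> {} \<and> card S = n \<longrightarrow>
      cond \<Omega> (jnt X S) (prj (CY ({0..<K} - S))) \<ge> real t * real (Q div K) * ln 2 * bnd S"
proof (induction n)
  case 0
  show ?case
  proof (intro allI impI)
    fix S assume h: "S \<subseteq> {0..<K} \<and> S \<noteq> {} \<and> card S = 0"
    have "finite S" using h by (meson finite_atLeastLessThan finite_subset)
    then show "cond \<Omega> (jnt X S) (prj (CY ({0..<K} - S))) \<ge> real t * real (Q div K) * ln 2 * bnd S"
      using h card_0_eq[OF \<open>finite S\<close>] by blast
  qed
next
  case (Suc m)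
  show ?case
  proof (intro allI impI)
    fix S assume h: "S \<subseteq> {0..<K} \<and> S \<noteq> {} \<and> card S = Suc m"
    have S: "S \<subseteq> {0..<K}" and cS: "card S = Suc m" using h by auto
    have finS: "finite S" using S by (rule finite_subset) simp
    define T where "T = real t * real (Q div K) * ln 2"
    have T0: "T \<ge> 0" unfolding T_def by simp
    define R where "R = {0..<K} - S"
    define c where "c = cond \<Omega> (jnt X S) (prj (CY R))"
    show "cond \<Omega> (jnt X S) (prj (CY ({0..<K} - S))) \<ge> real t * real (Q div K) * ln 2 * bnd S"
    proof (cases "m = 0")
      case True
      have "\<And>n. fS S n = 0"
      proof -
        fix n
        have "jc S n \<le> 1" using card_not_hold(2)[OF finS, of n] cS True by simp
        then have "jc S n = 0 \<or> jc S n = 1" by auto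
        then show "fS S n = 0" unfolding fS_def using cS True by auto
      qed
      then have "bnd S = 0" unfolding bnd_def by simp
      then show ?thesis using cond_nonneg[OF IV_finite] by simp
    next
      case False
      have compk: "\<And>k. k \<in> S \<Longrightarrow> {0..<K} - (S - {k}) = insert k R" unfolding R_def using S by auto
      have each: "\<And>k. k \<in> S \<Longrightarrow> cond \<Omega> (jnt X (S - {k})) (\<lambda>v. (X k v, prj (CY R) v))
          \<ge> T * (real (card {n\<in>{0..<N}. n \<notin> Acc k \<and> n \<notin> AccU ({0..<K} - S)}) + bnd (S - {k}))"
      proof -
        fix k assume k: "k \<in> S"
        have ih: "cond \<Omega> (jnt X (S - {k})) (prj (CY ({0..<K} - (S - {k})))) \<ge> T * bnd (S - {k})"
        proof -
          have c1: "card (S - {k}) = m" using k cS finS by (simp add: card_Diff_singleton)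
          have c2: "S - {k} \<subseteq> {0..<K}" using S by blast
          have c3: "S - {k} \<noteq> {}"
          proof
            assume e: "S - {k} = {}"
            have "card (S - {k}) = 0" unfolding e by (rule card.empty)
            then show False using c1 False by simp
          qed
          have "cond \<Omega> (jnt X (S - {k})) (prj (CY ({0..<K} - (S - {k})))) \<ge> real t * real (Q div K) * ln 2 * bnd (S - {k})"
            by (rule Suc.IH[rule_format]) (use c1 c2 c3 in blast)
          then show ?thesis unfolding T_def .
        qed
        have st: "cond \<Omega> (jnt X (S - {k})) (\<lambda>v. (X k v, prj (CY ({0..<K} - S)) v)) \<ge>
          real t * real (Q div K) * real (card {n\<in>{0..<N}. n \<notin> Acc k \<and> n \<notin> AccU ({0..<K} - S)}) * ln 2
          + cond \<Omega> (jnt X (S - {k})) (prj (CY (insert k ({0..<K} - S))))"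
          by (rule step[OF S k])
        show "cond \<Omega> (jnt X (S - {k})) (\<lambda>v. (X k v, prj (CY R) v))
          \<ge> T * (real (card {n\<in>{0..<N}. n \<notin> Acc k \<and> n \<notin> AccU ({0..<K} - S)}) + bnd (S - {k}))"
          using st ih unfolding compk[OF k] R_def T_def by (simp add: algebra_simps)
      qed
      have "T * (real m * bnd S)
          \<le> T * (\<Sum>k\<in>S. real (card {n\<in>{0..<N}. n \<notin> Acc k \<and> n \<notin> AccU ({0..<K} - S)}) + bnd (S - {k}))"
        using comb_ineq[OF S cS] T0 by (rule mult_left_mono)
      also have "\<dots> = (\<Sum>k\<in>S. T * (real (card {n\<in>{0..<N}. n \<notin> Acc k \<and> n \<notin> AccU ({0..<K} - S)}) + bnd (S - {k})))"
        by (simp add: sum_distrib_left)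
      also have "\<dots> \<le> (\<Sum>k\<in>S. cond \<Omega> (jnt X (S - {k})) (\<lambda>v. (X k v, prj (CY R) v)))"
        using each by (rule sum_mono)
      also have "\<dots> \<le> (real (card S) - 1) * c"
        unfolding c_def by (rule han[OF IV_finite finS])
      also have "real (card S) - 1 = real m" using cS by simp
      finally have "real m * (T * bnd S) \<le> real m * c" by (simp add: algebra_simps)
      then have "T * bnd S \<le> c" using False by simp
      then show ?thesis unfolding c_def R_def T_def by simp
    qed
  qed
qed

lemma final_bound:
  assumes K0: "0 < K"
  shows "real t * real (Q div K) * ln 2 * bnd {0..<K} \<le> real (\<Sum>k<K. l k) * ln 2"
proof -
  have "cond \<Omega> (jnt X {0..<K}) (prj (CY ({0..<K} - {0..<K}))) \<ge> real t * real (Q div K) * ln 2 * bnd {0..<K}"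
    by (rule main_ind[rule_format]) (use K0 in auto)
  moreover have "cond \<Omega> (jnt X {0..<K}) (prj (CY ({0..<K} - {0..<K}))) = ent \<Omega> (jnt X {0..<K})"
  proof -
    have e0: "CY ({0..<K} - {0..<K}) = {}" unfolding CY_def by simp
    have "ent \<Omega> (\<lambda>w. (jnt X {0..<K} w, prj {} w)) = ent \<Omega> (jnt X {0..<K})"
      by (rule ent_cong) (simp add: prj_def)
    moreover have "ent \<Omega> (prj {}) = 0"
    proof -
      have "prj {} = (\<lambda>w. (\<lambda>p. 0))" unfolding prj_def by auto
      then show ?thesis using ent_const[OF IV_finite] by simp
    qed
    ultimately show ?thesis unfolding cond_def e0 by simp
  qed
  moreover have "ent \<Omega> (jnt X {0..<K}) \<le> ln (real (card (PiE {0..<K} (\<lambda>k. {..<(2::nat) ^ l k}))))"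
  proof (rule ent_le_card[OF IV_finite])
    show "jnt X {0..<K} ` \<Omega> \<subseteq> PiE {0..<K} (\<lambda>k. {..<(2::nat) ^ l k})"
    proof
      fix y assume "y \<in> jnt X {0..<K} ` \<Omega>"
      then obtain v where v: "v \<in> \<Omega>" "y = jnt X {0..<K} v" by auto
      have "\<forall>k\<in>{0..<K}. X k v \<in> {..<(2::nat) ^ l k}" using valid1 v(1) by auto
      then show "y \<in> PiE {0..<K} (\<lambda>k. {..<(2::nat) ^ l k})" unfolding v(2) jnt_def
        by (subst restrict_PiE_iff) simp
    qed
    show "finite (PiE {0..<K} (\<lambda>k. {..<(2::nat) ^ l k}))" by (rule finite_PiE) auto
  qed
  moreover have "ln (real (card (PiE {0..<K} (\<lambda>k. {..<(2::nat) ^ l k})))) = real (\<Sum>k<K. l k) * ln 2"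
  proof -
    have "card (PiE {0..<K} (\<lambda>k. {..<(2::nat) ^ l k})) = (\<Prod>k\<in>{0..<K}. 2 ^ l k)"
      by (simp add: card_PiE)
    also have "\<dots> = 2 ^ (\<Sum>k\<in>{0..<K}. l k)" by (simp add: power_sum)
    finally show ?thesis by (simp add: ln_realpow atLeast0LessThan)
  qed
  ultimately show ?thesis by linarith
qed

end

theorem theorem6:
  fixes Lam r K N Q t :: nat
    and Kal :: "nat \<Rightarrow> nat"
    and conn M W :: "nat \<Rightarrow> nat set"
    and X :: "nat \<Rightarrow> (nat \<Rightarrow> nat \<Rightarrow> nat) \<Rightarrow> nat"
    and l :: "nat \<Rightarrow> nat"
  assumes "0 < Lam"
    and "1 \<le> r" and "r \<le> Lam - 1"
    and "\<exists>a\<in>{1..Lam-r}. Kal a \<noteq> 0"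
    and "K = (\<Sum>a=1..Lam-r. Kal a * (Lam choose a))"
    and "GC_MRG_conn Lam r Kal K conn"
    and "0 < N" and "0 < Q" and "0 < t" and "K dvd Q"
    and "reduce_assignment K Q W"
    and "map_assignment Lam N r M"
    and "valid_scheme Lam K Q N t conn M W X l"
  shows "comm_load K Q N t l \<ge> L_lb_new Lam r Kal K"
proof -
  note Kdef = assms(5) and gc = assms(6) and mapa = assms(12)
  have K0: "0 < K" using assms(8,10) by (metis dvd_0_left_iff gr0I less_irrefl)
  have Msub: "\<And>i. i < Lam \<Longrightarrow> M i \<subseteq> {0..<N}" using mapa unfolding map_assignment_def by auto
  interpret madc Lam K N Q t conn M W X l
    using Msub assms(11,13) by unfold_locales auto
  define A' where "A' = (\<Sum>a=1..Lam-r. Kal a * ((Lam - r) choose a))"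
  have jcn2: "jc {0..<K} n = K - A' \<and> A' \<le> K" if n: "n \<in> {0..<N}" for n
  proof -
    define Sn where "Sn = {i\<in>{0..<Lam}. n \<in> M i}"
    have cSn: "card Sn = r" using mapa[unfolded map_assignment_def] n unfolding Sn_def by blast
    have SnL: "Sn \<subseteq> {0..<Lam}" unfolding Sn_def by blast
    have e: "{k\<in>{0..<K}. n \<notin> Acc k} = {k\<in>{0..<K}. conn k \<inter> Sn = {}}"
      unfolding accessible_files_def Sn_def by blast
    have "card {k\<in>{0..<K}. conn k \<inter> Sn = {}} = A'"
      unfolding A'_def by (rule count_disjoint[OF gc Kdef SnL cSn])
    then have c: "card {k\<in>{0..<K}. n \<notin> Acc k} = A'" unfolding e .
    have "card {k\<in>{0..<K}. n \<notin> Acc k} = card {0..<K} - jc {0..<K} n"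
      by (rule card_not_hold(1)) simp
    moreover have "jc {0..<K} n \<le> card {0..<K}" by (rule card_not_hold(2)) simp
    moreover have "card {k\<in>{0..<K}. n \<notin> Acc k} \<le> card {0..<K}" by (rule card_mono) auto
    moreover have "card {0..<K} = K" by simp
    ultimately show ?thesis using c by linarith
  qed
  have jcn: "jc {0..<K} n = K - A'" if n: "n \<in> {0..<N}" for n using jcn2[OF n] by blast
  have A'K: "A' \<le> K" using jcn2[of 0] assms(7) by simp
  define Bn where "Bn = real K - real A'"
  have bnd_eq: "bnd {0..<K} = real N * (real A' / Bn)"
  proof -
    have "AccU ({0..<K} - {0..<K}) = {}" unfolding AccU_def by simp
    then have "bnd {0..<K} = (\<Sum>n\<in>{0..<N}. fS {0..<K} n)" unfolding bnd_def by simp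
    also have "\<dots> = (\<Sum>n\<in>{0..<N}. real A' / Bn)"
      by (rule sum.cong[OF refl]) (simp add: fS_def jcn Bn_def of_nat_diff A'K)
    finally show ?thesis by simp
  qed
  have fb: "real t * real (Q div K) * ln 2 * (real N * (real A' / Bn)) \<le> real (\<Sum>k<K. l k) * ln 2"
    using final_bound[OF K0] unfolding bnd_eq .
  have den: "(\<Sum>a=1..Lam-r. real (Kal a) * (real (Lam choose a) - real ((Lam - r) choose a))) = Bn"
  proof -
    have "(\<Sum>a=1..Lam-r. real (Kal a) * (real (Lam choose a) - real ((Lam - r) choose a)))
        = (\<Sum>a=1..Lam-r. real (Kal a * (Lam choose a))) - (\<Sum>a=1..Lam-r. real (Kal a * ((Lam - r) choose a)))"
      by (simp add: sum_subtractf right_diff_distrib)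
    also have "\<dots> = real K - real A'" unfolding Kdef A'_def by simp
    finally show ?thesis unfolding Bn_def .
  qed
  have lb: "L_lb_new Lam r Kal K = real A' / (real K * Bn)"
    unfolding L_lb_new_def den A'_def by simp
  have QK: "real (Q div K) = real Q / real K" using assms(10) K0 by (simp add: real_of_nat_div)
  have cl0: "comm_load K Q N t l \<ge> 0" unfolding comm_load_def by (intro divide_nonneg_nonneg) (simp_all add: sum_nonneg)
  show ?thesis
  proof (cases "Bn > 0")
    case False
    then have "Bn = 0" using A'K unfolding Bn_def by simp
    then show ?thesis unfolding lb using cl0 by simp
  next
    case True
    have fb': "(real t * real (Q div K) * (real N * (real A' / Bn))) * ln 2 \<le> real (\<Sum>k<K. l k) * ln 2"
      using fb by (simp only: mult_ac)
    have "real t * real (Q div K) * (real N * (real A' / Bn)) \<le> real (\<Sum>k<K. l k)"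
      by (rule mult_right_le_imp_le[OF fb']) simp
    then have "real t * (real Q / real K) * real N * real A' / Bn \<le> real (\<Sum>k<K. l k)"
      unfolding QK by simp
    then have "real t * real Q * real N * real A' \<le> real (\<Sum>k<K. l k) * (real K * Bn)"
      using True K0 by (simp add: field_simps)
    then have "real A' / (real K * Bn) \<le> real (\<Sum>k<K. l k) / (real Q * real N * real t)"
      using True K0 assms(7,8,9) by (simp add: field_simps)
    then show ?thesis unfolding lb comm_load_def .
  qed
qed

end
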